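(* Let $T:\mathbb{R}^{M}\times\cdots\times\mathbb{R}^{M}\to\mathbb{R}^D$ ($N$ factors) be a real $N$-linear contraction with respect to the Euclidean norm, with coefficients $T_{i,s}$, such that either (i) $T$ is a convex combination of norm-preserving $N$-linear maps $\mathbb{R}^M\times\cdots\times\mathbb{R}^M\to\mathbb{R}^D$, or (ii) $T$ has a norm-preserving dilation. Let $\rho$ be a density operator on $\mathcal{H}_1\otimes\cdots\otimes\mathcal{H}_N$ with $\rho^{T_\tau}\ge0$ for every subset $\tau\subseteq\{1,\dots,N\}$. Then for all Hermitian operators $A^{(k)}_j$ on $\mathcal{H}_k$ ($k=1,\dots,N$, $j=1,\dots,M$), $$\sum_{i=1}^D\Big(\sum_{s}T_{i,s}\,\mathrm{tr}\big[\rho\,A^{(1)}_{s_1}\otimes\cdots\otimes A^{(N)}_{s_N}\big]\Big)^2\le\sum_{s}\mathrm{tr}\big[\rho\,(A^{(1)}_{s_1})^2\otimes\cdots\otimes(A^{(N)}_{s_N})^2\big].$$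
   Context: An $N$-linear map $T$ is written $T(a^{(1)},\dots,a^{(N)})_i=\sum_{s\in\{1,\dots,M\}^N}T_{i,s}\prod_k a^{(k)}_{s_k}$. It is a contraction if $\|T(a^{(1)},\dots,a^{(N)})\|\le\prod_k\|a^{(k)}\|$ for all $a^{(k)}\in\mathbb{R}^M$, and norm-preserving if equality always holds ($\|\cdot\|$ Euclidean). A norm-preserving dilation of $T$ is a norm-preserving $N$-linear map $\tilde T:\mathbb{R}^M\times\cdots\times\mathbb{R}^M\to\mathbb{R}^{D'}$ with $D'\ge D$ whose first $D$ output coordinates coincide with $T$. $\mathcal{H}_1,\dots,\mathcal{H}_N$ are finite-dimensional complex Hilbert spaces with fixed orthonormal bases; $\rho^{T_\tau}$ is the partial transpose on the factors in $\tau$; a density operator is positive semidefinite of trace one. *)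

theory Defs
  imports Complex_Main "HOL-Library.FuncSet"
begin

text \<open>Finite-dimensional spaces H_k = C^(d k), k < N, with their standard bases.
  A basis index of H_1 (x) ... (x) H_N is a tuple x with x k < d k for k < N
  (extensional: undefined outside {..<N}). Operators on the tensor product are
  matrices indexed by such tuples.\<close>

definition idx :: "nat \<Rightarrow> (nat \<Rightarrow> nat) \<Rightarrow> (nat \<Rightarrow> nat) set" where
  "idx N d = PiE {..<N} (\<lambda>k. {..<d k})"

definition trace_op :: "nat \<Rightarrow> (nat \<Rightarrow> nat) \<Rightarrow> ((nat \<Rightarrow> nat) \<Rightarrow> (nat \<Rightarrow> nat) \<Rightarrow> complex) \<Rightarrow> complex" where
  "trace_op N d R = (\<Sum>x\<in>idx N d. R x x)"

definition op_mult :: "nat \<Rightarrow> (nat \<Rightarrow> nat) \<Rightarrow> ((nat \<Rightarrow> nat) \<Rightarrow> (nat \<Rightarrow> nat) \<Rightarrow> complex)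
    \<Rightarrow> ((nat \<Rightarrow> nat) \<Rightarrow> (nat \<Rightarrow> nat) \<Rightarrow> complex) \<Rightarrow> ((nat \<Rightarrow> nat) \<Rightarrow> (nat \<Rightarrow> nat) \<Rightarrow> complex)" where
  "op_mult N d A B = (\<lambda>x y. \<Sum>z\<in>idx N d. A x z * B z y)"

definition tensor_op :: "nat \<Rightarrow> (nat \<Rightarrow> nat \<Rightarrow> nat \<Rightarrow> complex) \<Rightarrow> ((nat \<Rightarrow> nat) \<Rightarrow> (nat \<Rightarrow> nat) \<Rightarrow> complex)" where
  "tensor_op N B = (\<lambda>x y. \<Prod>k<N. B k (x k) (y k))"

definition partial_transpose :: "nat set \<Rightarrow> ((nat \<Rightarrow> nat) \<Rightarrow> (nat \<Rightarrow> nat) \<Rightarrow> complex) \<Rightarrow> ((nat \<Rightarrow> nat) \<Rightarrow> (nat \<Rightarrow> nat) \<Rightarrow> complex)" where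
  "partial_transpose \<tau> R = (\<lambda>x y. R (\<lambda>k. if k \<in> \<tau> then y k else x k) (\<lambda>k. if k \<in> \<tau> then x k else y k))"

definition psd_op :: "nat \<Rightarrow> (nat \<Rightarrow> nat) \<Rightarrow> ((nat \<Rightarrow> nat) \<Rightarrow> (nat \<Rightarrow> nat) \<Rightarrow> complex) \<Rightarrow> bool" where
  "psd_op N d R = (\<forall>v :: (nat \<Rightarrow> nat) \<Rightarrow> complex.
      let q = (\<Sum>x\<in>idx N d. \<Sum>y\<in>idx N d. cnj (v x) * R x y * v y) in Im q = 0 \<and> Re q \<ge> 0)"

definition density_op :: "nat \<Rightarrow> (nat \<Rightarrow> nat) \<Rightarrow> ((nat \<Rightarrow> nat) \<Rightarrow> (nat \<Rightarrow> nat) \<Rightarrow> complex) \<Rightarrow> bool" where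
  "density_op N d R = (psd_op N d R \<and> trace_op N d R = 1)"

definition hermitian_mat :: "nat \<Rightarrow> (nat \<Rightarrow> nat \<Rightarrow> complex) \<Rightarrow> bool" where
  "hermitian_mat n B = (\<forall>i<n. \<forall>j<n. B i j = cnj (B j i))"

definition mat_sq :: "nat \<Rightarrow> (nat \<Rightarrow> nat \<Rightarrow> complex) \<Rightarrow> (nat \<Rightarrow> nat \<Rightarrow> complex)" where
  "mat_sq n B = (\<lambda>i j. \<Sum>z<n. B i z * B z j)"

text \<open>Real N-linear maps (R^M)^N -> R^D given by coefficients T i s, i < D,
  s in {0..<M}^N (0-based indices).\<close>

definition multi_idx :: "nat \<Rightarrow> nat \<Rightarrow> (nat \<Rightarrow> nat) set" where
  "multi_idx N M = PiE {..<N} (\<lambda>_. {..<M})"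

definition apply_ml :: "nat \<Rightarrow> nat \<Rightarrow> (nat \<Rightarrow> (nat \<Rightarrow> nat) \<Rightarrow> real) \<Rightarrow> (nat \<Rightarrow> nat \<Rightarrow> real) \<Rightarrow> nat \<Rightarrow> real" where
  "apply_ml N M T a i = (\<Sum>s\<in>multi_idx N M. T i s * (\<Prod>k<N. a k (s k)))"

definition vnorm :: "nat \<Rightarrow> (nat \<Rightarrow> real) \<Rightarrow> real" where
  "vnorm n v = sqrt (\<Sum>i<n. (v i)^2)"

definition contraction_ml :: "nat \<Rightarrow> nat \<Rightarrow> nat \<Rightarrow> (nat \<Rightarrow> (nat \<Rightarrow> nat) \<Rightarrow> real) \<Rightarrow> bool" where
  "contraction_ml N M D T = (\<forall>a. vnorm D (apply_ml N M T a) \<le> (\<Prod>k<N. vnorm M (a k)))"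

definition norm_preserving_ml :: "nat \<Rightarrow> nat \<Rightarrow> nat \<Rightarrow> (nat \<Rightarrow> (nat \<Rightarrow> nat) \<Rightarrow> real) \<Rightarrow> bool" where
  "norm_preserving_ml N M D T = (\<forall>a. vnorm D (apply_ml N M T a) = (\<Prod>k<N. vnorm M (a k)))"

definition convex_comb_norm_preserving :: "nat \<Rightarrow> nat \<Rightarrow> nat \<Rightarrow> (nat \<Rightarrow> (nat \<Rightarrow> nat) \<Rightarrow> real) \<Rightarrow> bool" where
  "convex_comb_norm_preserving N M D T = (\<exists>(L :: nat set) w U. finite L \<and> (\<forall>l\<in>L. w l \<ge> (0::real))
      \<and> sum w L = 1 \<and> (\<forall>l\<in>L. norm_preserving_ml N M D (U l))
      \<and> (\<forall>i<D. \<forall>s\<in>multi_idx N M. T i s = (\<Sum>l\<in>L. w l * U l i s)))"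

definition has_np_dilation :: "nat \<Rightarrow> nat \<Rightarrow> nat \<Rightarrow> (nat \<Rightarrow> (nat \<Rightarrow> nat) \<Rightarrow> real) \<Rightarrow> bool" where
  "has_np_dilation N M D T = (\<exists>D' U. D' \<ge> D \<and> norm_preserving_ml N M D' U
      \<and> (\<forall>i<D. \<forall>s\<in>multi_idx N M. U i s = T i s))"

end

theory Submission
  imports Defs "HOL-Library.FuncSet"
begin


definition mix :: "nat set \<Rightarrow> (nat \<Rightarrow> nat) \<Rightarrow> (nat \<Rightarrow> nat) \<Rightarrow> nat \<Rightarrow> nat" where
  "mix \<sigma> x y = (\<lambda>k. if k \<in> \<sigma> then y k else x k)"

lemma mix_mix1: "mix \<sigma> (mix \<sigma> x y) (mix \<sigma> y x) = x"
  by (auto simp: mix_def)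

lemma mix_same[simp]: "mix \<sigma> x x = x"
  by (auto simp: mix_def)

lemma mix_PiE: "x \<in> PiE {..<N} B \<Longrightarrow> y \<in> PiE {..<N} B \<Longrightarrow> mix \<sigma> x y \<in> PiE {..<N} B"
  unfolding mix_def by (auto simp: PiE_iff extensional_def)

lemma sum_mix:
  assumes "finite S" "\<And>x y. x \<in> S \<Longrightarrow> y \<in> S \<Longrightarrow> mix \<sigma> x y \<in> S"
  shows "(\<Sum>x\<in>S. \<Sum>y\<in>S. F x y) = (\<Sum>x\<in>S. \<Sum>y\<in>S. F (mix \<sigma> x y) (mix \<sigma> y x))"
proof -
  have "(\<Sum>x\<in>S. \<Sum>y\<in>S. F x y) = (\<Sum>p\<in>S\<times>S. F (fst p) (snd p))"
    by (simp add: sum.cartesian_product case_prod_beta)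
  also have "\<dots> = (\<Sum>p\<in>S\<times>S. F (mix \<sigma> (fst p) (snd p)) (mix \<sigma> (snd p) (fst p)))"
    by (rule sum.reindex_bij_witness[where i="\<lambda>p. (mix \<sigma> (fst p) (snd p), mix \<sigma> (snd p) (fst p))"
          and j="\<lambda>p. (mix \<sigma> (fst p) (snd p), mix \<sigma> (snd p) (fst p))"])
       (auto simp: mix_mix1 assms)
  also have "\<dots> = (\<Sum>x\<in>S. \<Sum>y\<in>S. F (mix \<sigma> x y) (mix \<sigma> y x))"
    by (simp add: sum.cartesian_product case_prod_beta)
  finally show ?thesis .
qed

lemma sum_pow_prod:
  fixes f g :: "'a \<Rightarrow> 'c :: comm_semiring_1"
  assumes "finite I"
  shows "(\<Sum>\<tau>\<in>Pow I. \<Prod>k\<in>I. if k \<in> \<tau> then f k else g k) = (\<Prod>k\<in>I. f k + g k)"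
proof -
  have "(\<Prod>k\<in>I. if k \<in> \<tau> then f k else g k) = prod f \<tau> * prod g (I - \<tau>)" if "\<tau> \<in> Pow I" for \<tau>
  proof -
    have "(\<Prod>k\<in>I. if k \<in> \<tau> then f k else g k) = (\<Prod>k\<in>\<tau>. if k \<in> \<tau> then f k else g k) * (\<Prod>k\<in>I-\<tau>. if k \<in> \<tau> then f k else g k)"
      using that assms by (metis (no_types, lifting) PowD prod.subset_diff mult.commute)
    also have "\<dots> = prod f \<tau> * prod g (I - \<tau>)" by (auto intro!: arg_cong2[where f="(*)"] prod.cong)
    finally show ?thesis .
  qed
  then show ?thesis by (simp add: prod_add[OF assms])
qed



lemma finite_multi_idx[simp]: "finite (multi_idx N M)"
  unfolding multi_idx_def by (auto intro!: finite_PiE)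

lemma finite_idx[simp]: "finite (idx N d)"
  unfolding idx_def by (auto intro!: finite_PiE)

lemma np_sq:
  assumes "norm_preserving_ml N M D U"
  shows "(\<Sum>i<D. (apply_ml N M U a i)^2) = (\<Prod>k<N. \<Sum>j<M. (a k j)^2)"
proof -
  have e: "sqrt (\<Sum>i<D. (apply_ml N M U a i)^2) = (\<Prod>k<N. sqrt (\<Sum>j<M. (a k j)^2))"
    using assms unfolding norm_preserving_ml_def vnorm_def by auto
  have "(\<Sum>i<D. (apply_ml N M U a i)^2) = (sqrt (\<Sum>i<D. (apply_ml N M U a i)^2))^2"
    by (simp add: sum_nonneg)
  also have "\<dots> = (\<Prod>k<N. (sqrt (\<Sum>j<M. (a k j)^2))^2)" by (simp only: e prod_power_distrib)
  also have "\<dots> = (\<Prod>k<N. \<Sum>j<M. (a k j)^2)" by (simp add: sum_nonneg)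
  finally show ?thesis .
qed

lemma apply_sq_expand:
  "(\<Sum>i<D. (apply_ml N M U a i)^2) =
   (\<Sum>p\<in>multi_idx N M. \<Sum>q\<in>multi_idx N M. (\<Sum>i<D. U i p * U i q) * (\<Prod>k<N. a k (p k) * a k (q k)))"
proof -
  have "(\<Sum>i<D. (apply_ml N M U a i)^2) = (\<Sum>i<D. \<Sum>p\<in>multi_idx N M. \<Sum>q\<in>multi_idx N M.
      U i p * U i q * (\<Prod>k<N. a k (p k) * a k (q k)))"
    unfolding apply_ml_def power2_eq_square sum_product
    by (intro sum.cong refl) (simp add: prod.distrib algebra_simps)
  also have "\<dots> = (\<Sum>p\<in>multi_idx N M. \<Sum>q\<in>multi_idx N M. \<Sum>i<D.
      U i p * U i q * (\<Prod>k<N. a k (p k) * a k (q k)))"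
    by (simp add: sum.swap[of _ "{..<D}"])
  also have "\<dots> = (\<Sum>p\<in>multi_idx N M. \<Sum>q\<in>multi_idx N M. (\<Sum>i<D. U i p * U i q) * (\<Prod>k<N. a k (p k) * a k (q k)))"
    by (simp add: sum_distrib_right)
  finally show ?thesis .
qed



lemma prod_of_bool: "finite I \<Longrightarrow> (\<Prod>k\<in>I. (of_bool (P k) :: 'a :: comm_semiring_1)) = of_bool (\<forall>k\<in>I. P k)"
  by (induction I rule: finite_induct) auto

lemma PiE_eq_iff_lessThan:
  assumes "p \<in> PiE {..<N} B" "c \<in> PiE {..<N} B'"
  shows "(\<forall>k<N. p k = c k) \<longleftrightarrow> p = c"
  using assms by (auto simp: PiE_iff extensional_def fun_eq_iff) (metis not_less)

lemma coeff_identity: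
  fixes U :: "nat \<Rightarrow> (nat \<Rightarrow> nat) \<Rightarrow> real"
  assumes np: "norm_preserving_ml N M D U"
    and s: "s \<in> multi_idx N M" and s': "s' \<in> multi_idx N M"
  shows "(\<Sum>\<tau>\<in>Pow {..<N}. \<Sum>i<D. U i (mix \<tau> s s') * U i (mix \<tau> s' s)) = 2^N * of_bool (s = s')"
proof -
  define S where "S = multi_idx N M"
  define G where "G p q = (\<Sum>i<D. U i p * U i q)" for p q
  define ap where "ap k j = (of_bool (j = s k) + of_bool (j = s' k) :: real)" for k j
  define am where "am k j = (of_bool (j = s k) - of_bool (j = s' k) :: real)" for k j
  define a where "a \<tau> k j = (if k \<in> \<tau> then am k j else ap k j)" for \<tau> :: "nat set" and k j
  define e where "e \<tau> = (\<Prod>k<N. if k \<in> \<tau> then -1 else 1 :: real)" for \<tau> :: "nat set"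
  have sS: "s \<in> S" "s' \<in> S" using s s' by (auto simp: S_def)
  have fS: "finite S" by (simp add: S_def)
  have mixS: "mix \<tau> x y \<in> S" if "x \<in> S" "y \<in> S" for \<tau> x y
    using that mix_PiE unfolding S_def multi_idx_def by blast
  have H: "(\<Sum>p\<in>S. \<Sum>q\<in>S. G p q * (\<Prod>k<N. a \<tau> k (p k) * a \<tau> k (q k))) = (\<Prod>k<N. \<Sum>j<M. (a \<tau> k j)^2)" for \<tau>
    using apply_sq_expand[where D=D and N=N and M=M and U=U and a="a \<tau>"] np_sq[OF np, where a="a \<tau>"] by (simp add: S_def G_def)
  have L1: "e \<tau> * (\<Prod>k<N. a \<tau> k (p k) * a \<tau> k (q k)) =
      (\<Prod>k<N. if k \<in> \<tau> then - (am k (p k) * am k (q k)) else ap k (p k) * ap k (q k))" for \<tau> p q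
    unfolding e_def prod.distrib[symmetric] by (intro prod.cong) (auto simp: a_def)
  have L2: "ap k x * ap k y - am k x * am k y =
      2 * of_bool (x = s' k \<and> y = s k) + 2 * of_bool (x = s k \<and> y = s' k)" for k x y
    unfolding ap_def am_def by (cases "x = s k"; cases "x = s' k"; cases "y = s k"; cases "y = s' k") auto
  have L3: "(\<Sum>\<tau>\<in>Pow {..<N}. e \<tau> * (\<Prod>k<N. a \<tau> k (p k) * a \<tau> k (q k))) =
      (\<Sum>\<tau>\<in>Pow {..<N}. 2^N * of_bool (p = mix \<tau> s s' \<and> q = mix \<tau> s' s))" if "p \<in> S" "q \<in> S" for p q
  proof -
    have "(\<Sum>\<tau>\<in>Pow {..<N}. e \<tau> * (\<Prod>k<N. a \<tau> k (p k) * a \<tau> k (q k))) =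
        (\<Prod>k<N. (- (am k (p k) * am k (q k))) + ap k (p k) * ap k (q k))"
      unfolding L1 by (rule sum_pow_prod) simp
    also have "\<dots> = (\<Prod>k<N. 2 * of_bool (p k = s' k \<and> q k = s k) + 2 * of_bool (p k = s k \<and> q k = s' k))"
      using L2 by (intro prod.cong) (auto simp: algebra_simps)
    also have "\<dots> = (\<Sum>\<tau>\<in>Pow {..<N}. \<Prod>k<N. if k \<in> \<tau> then 2 * of_bool (p k = s' k \<and> q k = s k)
        else 2 * of_bool (p k = s k \<and> q k = s' k))"
      by (rule sum_pow_prod[symmetric]) simp
    also have "\<dots> = (\<Sum>\<tau>\<in>Pow {..<N}. 2^N * of_bool (p = mix \<tau> s s' \<and> q = mix \<tau> s' s))"
    proof (intro sum.cong refl)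
      fix \<tau>
      have "(\<Prod>k<N. if k \<in> \<tau> then 2 * of_bool (p k = s' k \<and> q k = s k)
        else 2 * of_bool (p k = s k \<and> q k = s' k)) = (\<Prod>k<N. 2 * (of_bool (p k = mix \<tau> s s' k \<and> q k = mix \<tau> s' s k)::real))"
        by (intro prod.cong) (auto simp: mix_def)
      also have "\<dots> = 2^N * of_bool (\<forall>k\<in>{..<N}. p k = mix \<tau> s s' k \<and> q k = mix \<tau> s' s k)"
        by (simp add: prod.distrib prod_of_bool)
      also have "(\<forall>k\<in>{..<N}. p k = mix \<tau> s s' k \<and> q k = mix \<tau> s' s k) \<longleftrightarrow> (p = mix \<tau> s s' \<and> q = mix \<tau> s' s)"
        using PiE_eq_iff_lessThan[of p N "\<lambda>_. {..<M}" "mix \<tau> s s'" "\<lambda>_. {..<M}"] PiE_eq_iff_lessThan[of q N "\<lambda>_. {..<M}" "mix \<tau> s' s" "\<lambda>_. {..<M}"]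
          that mixS[OF sS] mixS[OF sS(2,1)] unfolding S_def multi_idx_def by auto
      finally show "(\<Prod>k<N. if k \<in> \<tau> then 2 * of_bool (p k = s' k \<and> q k = s k)
        else 2 * of_bool (p k = s k \<and> q k = s' k)) = (2::real)^N * of_bool (p = mix \<tau> s s' \<and> q = mix \<tau> s' s)" .
    qed
    finally show ?thesis .
  qed
  have LHS: "(\<Sum>\<tau>\<in>Pow {..<N}. e \<tau> * (\<Sum>p\<in>S. \<Sum>q\<in>S. G p q * (\<Prod>k<N. a \<tau> k (p k) * a \<tau> k (q k))))
      = 2^N * (\<Sum>\<tau>\<in>Pow {..<N}. G (mix \<tau> s s') (mix \<tau> s' s))"
  proof -
    have "(\<Sum>\<tau>\<in>Pow {..<N}. e \<tau> * (\<Sum>p\<in>S. \<Sum>q\<in>S. G p q * (\<Prod>k<N. a \<tau> k (p k) * a \<tau> k (q k))))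
      = (\<Sum>\<tau>\<in>Pow {..<N}. \<Sum>p\<in>S. \<Sum>q\<in>S. G p q * (e \<tau> * (\<Prod>k<N. a \<tau> k (p k) * a \<tau> k (q k))))"
      by (simp add: sum_distrib_left mult.left_commute)
    also have "\<dots> = (\<Sum>p\<in>S. \<Sum>\<tau>\<in>Pow {..<N}. \<Sum>q\<in>S. G p q * (e \<tau> * (\<Prod>k<N. a \<tau> k (p k) * a \<tau> k (q k))))"
      by (rule sum.swap)
    also have "\<dots> = (\<Sum>p\<in>S. \<Sum>q\<in>S. \<Sum>\<tau>\<in>Pow {..<N}. G p q * (e \<tau> * (\<Prod>k<N. a \<tau> k (p k) * a \<tau> k (q k))))"
      by (intro sum.cong refl, rule sum.swap)
    also have "\<dots> = (\<Sum>p\<in>S. \<Sum>q\<in>S. G p q * (\<Sum>\<tau>\<in>Pow {..<N}. e \<tau> * (\<Prod>k<N. a \<tau> k (p k) * a \<tau> k (q k))))"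
      by (simp add: sum_distrib_left)
    also have "\<dots> = (\<Sum>p\<in>S. \<Sum>q\<in>S. G p q * (\<Sum>\<tau>\<in>Pow {..<N}. 2^N * of_bool (p = mix \<tau> s s' \<and> q = mix \<tau> s' s)))"
      by (intro sum.cong refl) (simp add: L3)
    also have "\<dots> = (\<Sum>p\<in>S. \<Sum>q\<in>S. \<Sum>\<tau>\<in>Pow {..<N}. 2^N * (G p q * of_bool (p = mix \<tau> s s' \<and> q = mix \<tau> s' s)))"
      by (simp only: sum_distrib_left mult.left_commute)
    also have "\<dots> = (\<Sum>p\<in>S. \<Sum>\<tau>\<in>Pow {..<N}. \<Sum>q\<in>S. 2^N * (G p q * of_bool (p = mix \<tau> s s' \<and> q = mix \<tau> s' s)))"
      by (intro sum.cong refl, rule sum.swap)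
    also have "\<dots> = (\<Sum>\<tau>\<in>Pow {..<N}. \<Sum>p\<in>S. \<Sum>q\<in>S. 2^N * (G p q * of_bool (p = mix \<tau> s s' \<and> q = mix \<tau> s' s)))"
      by (rule sum.swap)
    also have "\<dots> = (\<Sum>\<tau>\<in>Pow {..<N}. 2^N * (\<Sum>p\<in>S. \<Sum>q\<in>S. G p q * of_bool (p = mix \<tau> s s' \<and> q = mix \<tau> s' s)))"
      by (simp add: sum_distrib_left)
    also have "\<dots> = (\<Sum>\<tau>\<in>Pow {..<N}. 2^N * G (mix \<tau> s s') (mix \<tau> s' s))"
    proof (intro sum.cong refl)
      fix \<tau>
      have "(\<Sum>p\<in>S. \<Sum>q\<in>S. G p q * of_bool (p = mix \<tau> s s' \<and> q = mix \<tau> s' s)) = G (mix \<tau> s s') (mix \<tau> s' s)"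
      proof -
        have cS: "mix \<tau> s s' \<in> S" "mix \<tau> s' s \<in> S" using mixS[OF sS] mixS[OF sS(2,1)] by auto
        have "(\<Sum>p\<in>S. \<Sum>q\<in>S. G p q * of_bool (p = mix \<tau> s s' \<and> q = mix \<tau> s' s))
           = (\<Sum>p\<in>S. if p = mix \<tau> s s' then (\<Sum>q\<in>S. if q = mix \<tau> s' s then G p q else 0) else 0)"
          by (intro sum.cong refl) (auto intro!: sum.cong)
        also have "\<dots> = G (mix \<tau> s s') (mix \<tau> s' s)" using cS fS by (simp add: sum.delta)
        finally show ?thesis .
      qed
      then show "2^N * (\<Sum>p\<in>S. \<Sum>q\<in>S. G p q * of_bool (p = mix \<tau> s s' \<and> q = mix \<tau> s' s)) = 2^N * G (mix \<tau> s s') (mix \<tau> s' s)"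
        by simp
    qed
    finally show ?thesis by (simp add: sum_distrib_left)
  qed
  have RHS: "(\<Sum>\<tau>\<in>Pow {..<N}. e \<tau> * (\<Prod>k<N. \<Sum>j<M. (a \<tau> k j)^2)) = 4^N * of_bool (s = s')"
  proof -
    have "(\<Sum>\<tau>\<in>Pow {..<N}. e \<tau> * (\<Prod>k<N. \<Sum>j<M. (a \<tau> k j)^2)) =
      (\<Sum>\<tau>\<in>Pow {..<N}. \<Prod>k<N. if k \<in> \<tau> then - (\<Sum>j<M. (am k j)^2) else (\<Sum>j<M. (ap k j)^2))"
      unfolding e_def prod.distrib[symmetric] by (intro sum.cong prod.cong refl) (auto simp: a_def)
    also have "\<dots> = (\<Prod>k<N. - (\<Sum>j<M. (am k j)^2) + (\<Sum>j<M. (ap k j)^2))"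
      by (rule sum_pow_prod) simp
    also have "\<dots> = (\<Prod>k<N. 4 * of_bool (s k = s' k))"
    proof (intro prod.cong refl)
      fix k assume k: "k \<in> {..<N}"
      have sk: "s k < M" using s k by (auto simp: multi_idx_def PiE_iff)
      have "- (\<Sum>j<M. (am k j)^2) + (\<Sum>j<M. (ap k j)^2) = (\<Sum>j<M. 4 * of_bool (j = s k \<and> s k = s' k))"
        unfolding sum_negf[symmetric] sum.distrib[symmetric]
      proof (intro sum.cong refl)
        fix j
        show "- (am k j)\<^sup>2 + (ap k j)\<^sup>2 = 4 * of_bool (j = s k \<and> s k = s' k)"
          unfolding am_def ap_def by (cases "j = s k"; cases "j = s' k") (auto simp: power2_eq_square)
      qed
      also have "\<dots> = 4 * of_bool (s k = s' k)"
      proof -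
        have "(\<Sum>j<M. 4 * of_bool (j = s k \<and> s k = s' k)) = (\<Sum>j<M. if j = s k then 4 * (of_bool (s k = s' k)::real) else 0)"
          by (intro sum.cong refl) auto
        also have "\<dots> = 4 * of_bool (s k = s' k)" using sk by (simp add: sum.delta)
        finally show ?thesis .
      qed
      finally show "- (\<Sum>j<M. (am k j)^2) + (\<Sum>j<M. (ap k j)^2) = 4 * of_bool (s k = s' k)" .
    qed
    also have "\<dots> = 4^N * of_bool (\<forall>k\<in>{..<N}. s k = s' k)"
      by (simp add: prod.distrib prod_of_bool)
    also have "(\<forall>k\<in>{..<N}. s k = s' k) \<longleftrightarrow> s = s'"
      using PiE_eq_iff_lessThan[of s N "\<lambda>_. {..<M}" s' "\<lambda>_. {..<M}"] s s' unfolding multi_idx_def by auto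
    finally show ?thesis .
  qed
  have "2^N * (\<Sum>\<tau>\<in>Pow {..<N}. G (mix \<tau> s s') (mix \<tau> s' s)) = 4^N * (of_bool (s = s') :: real)"
    using LHS RHS H by simp
  moreover have "(4::real)^N = 2^N * 2^N" by (simp add: power_mult_distrib[symmetric])
  ultimately show ?thesis unfolding G_def by simp
qed



definition Pm where "Pm N A s z x = (\<Prod>k<N. (A k (s k) (z k) (x k) :: complex))"
definition Qm where "Qm N A \<sigma> s z x = (\<Prod>k<N. if k \<in> \<sigma> then A k (s k) (x k) (z k) else (A k (s k) (z k) (x k) :: complex))"
definition Bm where "Bm N M A \<sigma> t z x = (\<Sum>s\<in>multi_idx N M. complex_of_real (t s) * Qm N A \<sigma> s z x)"
definition Wm where "Wm N M d A \<rho> \<sigma> t = (\<Sum>z\<in>idx N d. \<Sum>x\<in>idx N d. \<Sum>y\<in>idx N d.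
   Bm N M A \<sigma> t z x * \<rho> (mix \<sigma> x y) (mix \<sigma> y x) * cnj (Bm N M A \<sigma> t z y))"

lemma ev_expand: "trace_op N d (op_mult N d \<rho> (tensor_op N (\<lambda>k. A k (s k)))) =
   (\<Sum>x\<in>idx N d. \<Sum>z\<in>idx N d. \<rho> x z * Pm N A s z x)"
  unfolding trace_op_def op_mult_def tensor_op_def Pm_def by simp

lemma mix_idx: "x \<in> idx N d \<Longrightarrow> y \<in> idx N d \<Longrightarrow> mix \<sigma> x y \<in> idx N d"
  unfolding idx_def by (rule mix_PiE)

lemma sum_mix_idx: "(\<Sum>x\<in>idx N d. \<Sum>y\<in>idx N d. F x y) = (\<Sum>x\<in>idx N d. \<Sum>y\<in>idx N d. F (mix \<sigma> x y) (mix \<sigma> y x))"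
  by (rule sum_mix) (simp_all add: mix_idx)

lemma sum_mix_mi: "(\<Sum>x\<in>multi_idx N M. \<Sum>y\<in>multi_idx N M. F x y) = (\<Sum>x\<in>multi_idx N M. \<Sum>y\<in>multi_idx N M. F (mix \<sigma> x y) (mix \<sigma> y x))"
  by (rule sum_mix) (simp_all add: multi_idx_def mix_PiE finite_PiE)

lemma herm_entry:
  assumes herm: "\<forall>k<N. \<forall>j<M. hermitian_mat (d k) (A k j)"
    and "x \<in> idx N d" "y \<in> idx N d" "s \<in> multi_idx N M" "k < N"
  shows "cnj (A k (s k) (x k) (y k)) = A k (s k) (y k) (x k)"
proof -
  have "x k < d k" "y k < d k" "s k < M" using assms by (auto simp: idx_def multi_idx_def PiE_iff)
  moreover have "hermitian_mat (d k) (A k (s k))" using herm assms(5) \<open>s k < M\<close> by blast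
  ultimately have "A k (s k) (y k) (x k) = cnj (A k (s k) (x k) (y k))"
    unfolding hermitian_mat_def by blast
  then show ?thesis by simp
qed

lemma cnj_Pm:
  assumes herm: "\<forall>k<N. \<forall>j<M. hermitian_mat (d k) (A k j)"
    and "x \<in> idx N d" "y \<in> idx N d" "s \<in> multi_idx N M"
  shows "cnj (Pm N A s x y) = Pm N A s y x"
  unfolding Pm_def cnj_prod using herm_entry[OF assms] by (intro prod.cong) auto

lemma delta3a: "finite I \<Longrightarrow> (\<Sum>z\<in>I. \<Sum>x\<in>I. \<Sum>y\<in>I. f z x y * of_bool (z = y)) = (\<Sum>x\<in>I. \<Sum>y\<in>I. (f y x y :: complex))"
proof -
  assume fI: "finite I"
  have "(\<Sum>z\<in>I. \<Sum>x\<in>I. \<Sum>y\<in>I. f z x y * of_bool (z = y)) = (\<Sum>x\<in>I. \<Sum>z\<in>I. \<Sum>y\<in>I. f z x y * of_bool (z = y))"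
    by (rule sum.swap)
  also have "\<dots> = (\<Sum>x\<in>I. \<Sum>y\<in>I. \<Sum>z\<in>I. f z x y * of_bool (z = y))"
    by (rule sum.cong[OF refl], rule sum.swap)
  also have "\<dots> = (\<Sum>x\<in>I. \<Sum>y\<in>I. f y x y)"
    using fI by (intro sum.cong refl) (simp add: of_bool_def if_distrib sum.delta' cong: if_cong)
  finally show ?thesis .
qed

lemma delta3b: "finite I \<Longrightarrow> (\<Sum>z\<in>I. \<Sum>x\<in>I. \<Sum>y\<in>I. f z x y * of_bool (z = x)) = (\<Sum>x\<in>I. \<Sum>y\<in>I. (f x x y :: complex))"
proof -
  assume fI: "finite I"
  have "(\<Sum>z\<in>I. \<Sum>x\<in>I. \<Sum>y\<in>I. f z x y * of_bool (z = x)) = (\<Sum>x\<in>I. \<Sum>z\<in>I. \<Sum>y\<in>I. f z x y * of_bool (z = x))"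
    by (rule sum.swap)
  also have "\<dots> = (\<Sum>x\<in>I. \<Sum>z\<in>I. if z = x then (\<Sum>y\<in>I. f z x y) else 0)"
    by (intro sum.cong refl) (auto simp: sum_distrib_right[symmetric])
  also have "\<dots> = (\<Sum>x\<in>I. \<Sum>y\<in>I. f x x y)"
    using fI by (simp add: sum.delta)
  finally show ?thesis .
qed

lemma delta3c: "finite I \<Longrightarrow> (\<Sum>z\<in>I. \<Sum>x\<in>I. \<Sum>y\<in>I. f z x y * of_bool (z = x) * of_bool (z = y)) = (\<Sum>x\<in>I. (f x x x :: complex))"
proof -
  assume fI: "finite I"
  have "(\<Sum>z\<in>I. \<Sum>x\<in>I. \<Sum>y\<in>I. f z x y * of_bool (z = x) * of_bool (z = y)) = (\<Sum>z\<in>I. \<Sum>x\<in>I. if x = z then f z z z else 0)"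
  proof (rule sum.cong[OF refl], rule sum.cong[OF refl])
    fix z x assume "z \<in> I" "x \<in> I"
    have "(\<Sum>y\<in>I. f z x y * of_bool (z = x) * of_bool (z = y)) = (\<Sum>y\<in>I. if y = z then (if x = z then f z z z else 0) else 0)"
      by (rule sum.cong[OF refl]) auto
    also have "\<dots> = (if x = z then f z z z else 0)" using fI \<open>z \<in> I\<close> by (simp add: sum.delta)
    finally show "(\<Sum>y\<in>I. f z x y * of_bool (z = x) * of_bool (z = y)) = (if x = z then f z z z else 0)" .
  qed
  also have "\<dots> = (\<Sum>x\<in>I. f x x x)" using fI by (simp add: sum.delta)
  finally show ?thesis .
qed



lemma cnj_of_bool[simp]: "cnj (of_bool b) = of_bool b"
  by (cases b) auto

lemma PT_mix: "partial_transpose \<sigma> R x y = R (mix \<sigma> x y) (mix \<sigma> y x)"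
  unfolding partial_transpose_def mix_def by simp

lemma Pm_mix1: "Pm N A s (mix \<sigma> y x) (mix \<sigma> x y) = Qm N A \<sigma> s y x"
  unfolding Pm_def Qm_def mix_def by (intro prod.cong) auto

lemma Pm_mix2: "Pm N A s (mix \<sigma> x y) (mix \<sigma> y x) = Qm N A \<sigma> s x y"
  unfolding Pm_def Qm_def mix_def by (intro prod.cong) auto

lemma stepA:
  fixes t :: "(nat \<Rightarrow> nat) \<Rightarrow> real"
  assumes psd: "psd_op N d (partial_transpose \<sigma> \<rho>)"
    and tr: "trace_op N d \<rho> = 1"
    and herm: "\<forall>k<N. \<forall>j<M. hermitian_mat (d k) (A k j)"
  shows "(\<Sum>s\<in>multi_idx N M. t s * Re (trace_op N d (op_mult N d \<rho> (tensor_op N (\<lambda>k. A k (s k))))))^2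
         \<le> Re (Wm N M d A \<rho> \<sigma> t)"
proof -
  define I where "I = idx N d"
  define S where "S = multi_idx N M"
  define ev where "ev s = trace_op N d (op_mult N d \<rho> (tensor_op N (\<lambda>k. A k (s k))))" for s
  define c where "c = (\<Sum>s\<in>S. t s * Re (ev s))"
  define B where "B z x = Bm N M A \<sigma> t z x" for z x
  define R where "R x y = \<rho> (mix \<sigma> x y) (mix \<sigma> y x)" for x y
  have fI: "finite I" by (simp add: I_def)
  have fS: "finite S" by (simp add: S_def)
  define q where "q z = (\<Sum>x\<in>I. \<Sum>y\<in>I. (B z x - of_real c * of_bool (z = x)) * R x y * (cnj (B z y) - of_real c * of_bool (z = y)))" for z
  have q_nonneg: "0 \<le> Re (q z)" for z
  proof -
    define v where "v y = cnj (B z y - of_real c * of_bool (z = y))" for y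
    have "0 \<le> Re (\<Sum>x\<in>I. \<Sum>y\<in>I. cnj (v x) * partial_transpose \<sigma> \<rho> x y * v y)"
      using psd unfolding psd_op_def Let_def I_def by blast
    also have "(\<Sum>x\<in>I. \<Sum>y\<in>I. cnj (v x) * partial_transpose \<sigma> \<rho> x y * v y) = q z"
      unfolding q_def v_def R_def PT_mix by simp
    finally show ?thesis .
  qed
  have W_eq: "Wm N M d A \<rho> \<sigma> t = (\<Sum>z\<in>I. \<Sum>x\<in>I. \<Sum>y\<in>I. B z x * R x y * cnj (B z y))"
    unfolding Wm_def B_def R_def I_def ..
  define X1 where "X1 = (\<Sum>x\<in>I. \<Sum>y\<in>I. B y x * R x y)"
  define X2 where "X2 = (\<Sum>x\<in>I. \<Sum>y\<in>I. R x y * cnj (B x y))"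
  have qsum: "(\<Sum>z\<in>I. q z) = Wm N M d A \<rho> \<sigma> t - of_real c * X1 - of_real c * X2 + of_real c ^ 2 * (\<Sum>x\<in>I. R x x)"
  proof -
    have "(\<Sum>z\<in>I. q z) = (\<Sum>z\<in>I. \<Sum>x\<in>I. \<Sum>y\<in>I. B z x * R x y * cnj (B z y)
        - of_real c * ((B z x * R x y) * of_bool (z = y))
        - of_real c * ((R x y * cnj (B z y)) * of_bool (z = x))
        + of_real c ^ 2 * (R x y * of_bool (z = x) * of_bool (z = y)))"
      unfolding q_def by (intro sum.cong refl) (simp add: algebra_simps power2_eq_square)
    also have "\<dots> = (\<Sum>z\<in>I. \<Sum>x\<in>I. \<Sum>y\<in>I. B z x * R x y * cnj (B z y))
        - of_real c * (\<Sum>z\<in>I. \<Sum>x\<in>I. \<Sum>y\<in>I. (B z x * R x y) * of_bool (z = y))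
        - of_real c * (\<Sum>z\<in>I. \<Sum>x\<in>I. \<Sum>y\<in>I. (R x y * cnj (B z y)) * of_bool (z = x))
        + of_real c ^ 2 * (\<Sum>z\<in>I. \<Sum>x\<in>I. \<Sum>y\<in>I. R x y * of_bool (z = x) * of_bool (z = y))"
      by (simp only: sum.distrib sum_subtractf sum_distrib_left)
    also have "\<dots> = Wm N M d A \<rho> \<sigma> t - of_real c * X1 - of_real c * X2 + of_real c ^ 2 * (\<Sum>x\<in>I. R x x)"
      unfolding W_eq X1_def X2_def
      using delta3a[OF fI, of "\<lambda>z x y. B z x * R x y"] delta3b[OF fI, of "\<lambda>z x y. R x y * cnj (B z y)"]
        delta3c[OF fI, of "\<lambda>z x y. R x y"] by simp
    finally show ?thesis .
  qed
  have RR: "(\<Sum>x\<in>I. R x x) = 1" using tr unfolding R_def trace_op_def I_def by simp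
  have X1_eq: "X1 = (\<Sum>s\<in>S. of_real (t s) * ev s)"
  proof -
    have "X1 = (\<Sum>x\<in>I. \<Sum>y\<in>I. \<Sum>s\<in>S. of_real (t s) * (\<rho> (mix \<sigma> x y) (mix \<sigma> y x) * Qm N A \<sigma> s y x))"
      unfolding X1_def B_def Bm_def R_def S_def by (simp add: sum_distrib_right sum_distrib_left mult_ac)
    also have "\<dots> = (\<Sum>x\<in>I. \<Sum>s\<in>S. \<Sum>y\<in>I. of_real (t s) * (\<rho> (mix \<sigma> x y) (mix \<sigma> y x) * Qm N A \<sigma> s y x))"
      by (rule sum.cong[OF refl], rule sum.swap)
    also have "\<dots> = (\<Sum>s\<in>S. \<Sum>x\<in>I. \<Sum>y\<in>I. of_real (t s) * (\<rho> (mix \<sigma> x y) (mix \<sigma> y x) * Qm N A \<sigma> s y x))"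
      by (rule sum.swap)
    also have "\<dots> = (\<Sum>s\<in>S. of_real (t s) * (\<Sum>x\<in>I. \<Sum>y\<in>I. \<rho> (mix \<sigma> x y) (mix \<sigma> y x) * Qm N A \<sigma> s y x))"
      by (simp add: sum_distrib_left)
    also have "\<dots> = (\<Sum>s\<in>S. of_real (t s) * ev s)"
    proof (rule sum.cong[OF refl])
      fix s
      have "ev s = (\<Sum>x\<in>I. \<Sum>y\<in>I. \<rho> x y * Pm N A s y x)" unfolding ev_def I_def by (rule ev_expand)
      also have "\<dots> = (\<Sum>x\<in>I. \<Sum>y\<in>I. \<rho> (mix \<sigma> x y) (mix \<sigma> y x) * Pm N A s (mix \<sigma> y x) (mix \<sigma> x y))"
        unfolding I_def by (rule sum_mix_idx)
      also have "\<dots> = (\<Sum>x\<in>I. \<Sum>y\<in>I. \<rho> (mix \<sigma> x y) (mix \<sigma> y x) * Qm N A \<sigma> s y x)"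
        by (simp only: Pm_mix1)
      finally show "of_real (t s) * (\<Sum>x\<in>I. \<Sum>y\<in>I. \<rho> (mix \<sigma> x y) (mix \<sigma> y x) * Qm N A \<sigma> s y x) = of_real (t s) * ev s"
        by simp
    qed
    finally show ?thesis .
  qed
  have X2_eq: "X2 = X1"
  proof -
    have "X2 = (\<Sum>x\<in>I. \<Sum>y\<in>I. \<Sum>s\<in>S. of_real (t s) * (\<rho> (mix \<sigma> x y) (mix \<sigma> y x) * cnj (Qm N A \<sigma> s x y)))"
      unfolding X2_def B_def Bm_def R_def S_def by (simp add: sum_distrib_left cnj_sum mult_ac)
    also have "\<dots> = (\<Sum>x\<in>I. \<Sum>s\<in>S. \<Sum>y\<in>I. of_real (t s) * (\<rho> (mix \<sigma> x y) (mix \<sigma> y x) * cnj (Qm N A \<sigma> s x y)))"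
      by (rule sum.cong[OF refl], rule sum.swap)
    also have "\<dots> = (\<Sum>s\<in>S. \<Sum>x\<in>I. \<Sum>y\<in>I. of_real (t s) * (\<rho> (mix \<sigma> x y) (mix \<sigma> y x) * cnj (Qm N A \<sigma> s x y)))"
      by (rule sum.swap)
    also have "\<dots> = (\<Sum>s\<in>S. of_real (t s) * (\<Sum>x\<in>I. \<Sum>y\<in>I. \<rho> (mix \<sigma> x y) (mix \<sigma> y x) * cnj (Qm N A \<sigma> s x y)))"
      by (simp add: sum_distrib_left)
    also have "\<dots> = (\<Sum>s\<in>S. of_real (t s) * ev s)"
    proof (rule sum.cong[OF refl])
      fix s assume sS: "s \<in> S"
      have "ev s = (\<Sum>x\<in>I. \<Sum>y\<in>I. \<rho> x y * Pm N A s y x)" unfolding ev_def I_def by (rule ev_expand)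
      also have "\<dots> = (\<Sum>x\<in>I. \<Sum>y\<in>I. \<rho> x y * cnj (Pm N A s x y))"
        using cnj_Pm[OF herm _ _ sS[unfolded S_def]] unfolding I_def by (intro sum.cong refl) simp
      also have "\<dots> = (\<Sum>x\<in>I. \<Sum>y\<in>I. \<rho> (mix \<sigma> x y) (mix \<sigma> y x) * cnj (Pm N A s (mix \<sigma> x y) (mix \<sigma> y x)))"
        unfolding I_def by (rule sum_mix_idx)
      also have "\<dots> = (\<Sum>x\<in>I. \<Sum>y\<in>I. \<rho> (mix \<sigma> x y) (mix \<sigma> y x) * cnj (Qm N A \<sigma> s x y))"
        by (simp only: Pm_mix2)
      finally show "of_real (t s) * (\<Sum>x\<in>I. \<Sum>y\<in>I. \<rho> (mix \<sigma> x y) (mix \<sigma> y x) * cnj (Qm N A \<sigma> s x y)) = of_real (t s) * ev s"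
        by simp
    qed
    finally show ?thesis using X1_eq by simp
  qed
  have ReX1: "Re X1 = c" unfolding X1_eq c_def by (simp add: Re_sum)
  have "0 \<le> Re (\<Sum>z\<in>I. q z)" unfolding Re_sum by (rule sum_nonneg) (rule q_nonneg)
  also have "Re (\<Sum>z\<in>I. q z) = Re (Wm N M d A \<rho> \<sigma> t) - c * c - c * c + c^2"
    unfolding qsum RR X2_eq using ReX1 by (simp add: power2_eq_square)
  finally show ?thesis unfolding c_def ev_def S_def by (simp add: power2_eq_square)
qed



lemma swap22: "(\<Sum>a\<in>A. \<Sum>b\<in>B. \<Sum>c\<in>C. \<Sum>e\<in>E. f a b c e) = (\<Sum>c\<in>C. \<Sum>e\<in>E. \<Sum>a\<in>A. \<Sum>b\<in>B. (f a b c e :: 'z::comm_monoid_add))"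
proof -
  have "(\<Sum>a\<in>A. \<Sum>b\<in>B. \<Sum>c\<in>C. \<Sum>e\<in>E. f a b c e) = (\<Sum>a\<in>A. \<Sum>c\<in>C. \<Sum>b\<in>B. \<Sum>e\<in>E. f a b c e)"
    by (rule sum.cong[OF refl], rule sum.swap)
  also have "\<dots> = (\<Sum>a\<in>A. \<Sum>c\<in>C. \<Sum>e\<in>E. \<Sum>b\<in>B. f a b c e)"
    by (rule sum.cong[OF refl], rule sum.cong[OF refl], rule sum.swap)
  also have "\<dots> = (\<Sum>c\<in>C. \<Sum>a\<in>A. \<Sum>e\<in>E. \<Sum>b\<in>B. f a b c e)"
    by (rule sum.swap)
  also have "\<dots> = (\<Sum>c\<in>C. \<Sum>e\<in>E. \<Sum>a\<in>A. \<Sum>b\<in>B. f a b c e)"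
    by (rule sum.cong[OF refl], rule sum.swap)
  finally show ?thesis .
qed

lemma swap21: "(\<Sum>a\<in>A. \<Sum>b\<in>B. \<Sum>c\<in>C. f a b c) = (\<Sum>c\<in>C. \<Sum>a\<in>A. \<Sum>b\<in>B. (f a b c :: 'z::comm_monoid_add))"
proof -
  have "(\<Sum>a\<in>A. \<Sum>b\<in>B. \<Sum>c\<in>C. f a b c) = (\<Sum>a\<in>A. \<Sum>c\<in>C. \<Sum>b\<in>B. f a b c)"
    by (rule sum.cong[OF refl], rule sum.swap)
  also have "\<dots> = (\<Sum>c\<in>C. \<Sum>a\<in>A. \<Sum>b\<in>B. f a b c)"
    by (rule sum.swap)
  finally show ?thesis .
qed

definition Hm where "Hm N A x y z p q = (\<Prod>k<N. A k (p k) (y k) (z k) * (A k (q k) (z k) (x k) :: complex))"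

lemma QQ_H:
  assumes herm: "\<forall>k<N. \<forall>j<M. hermitian_mat (d k) (A k j)"
    and xyz: "x \<in> idx N d" "y \<in> idx N d" "z \<in> idx N d" and s': "s' \<in> multi_idx N M"
  shows "Qm N A \<sigma> s z (mix \<sigma> x y) * cnj (Qm N A \<sigma> s' z (mix \<sigma> y x)) = Hm N A x y z (mix \<sigma> s' s) (mix \<sigma> s s')"
  unfolding Qm_def Hm_def cnj_prod prod.distrib[symmetric]
proof (intro prod.cong refl)
  fix k assume "k \<in> {..<N}"
  then have k: "k < N" by simp
  show "(if k \<in> \<sigma> then A k (s k) (mix \<sigma> x y k) (z k) else A k (s k) (z k) (mix \<sigma> x y k)) *
        cnj (if k \<in> \<sigma> then A k (s' k) (mix \<sigma> y x k) (z k) else A k (s' k) (z k) (mix \<sigma> y x k)) =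
        A k (mix \<sigma> s' s k) (y k) (z k) * A k (mix \<sigma> s s' k) (z k) (x k)"
    using herm_entry[OF herm xyz(1) xyz(3) s' k] herm_entry[OF herm xyz(3) xyz(2) s' k]
    by (auto simp: mix_def)
qed



lemma BB_sum:
  assumes herm: "\<forall>k<N. \<forall>j<M. hermitian_mat (d k) (A k j)"
    and np: "norm_preserving_ml N M D U"
    and xyz: "x \<in> idx N d" "y \<in> idx N d" "z \<in> idx N d"
  shows "(\<Sum>\<sigma>\<in>Pow {..<N}. \<Sum>i<D. Bm N M A \<sigma> (U i) z (mix \<sigma> x y) * cnj (Bm N M A \<sigma> (U i) z (mix \<sigma> y x)))
       = 2^N * (\<Sum>p\<in>multi_idx N M. Hm N A x y z p p)"
proof -
  define S where "S = multi_idx N M"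
  define G where "G p q = (\<Sum>i<D. U i p * U i q)" for p q
  define H where "H = Hm N A x y z"
  have fS: "finite S" by (simp add: S_def)
  have step1: "(\<Sum>i<D. Bm N M A \<sigma> (U i) z (mix \<sigma> x y) * cnj (Bm N M A \<sigma> (U i) z (mix \<sigma> y x)))
      = (\<Sum>s\<in>S. \<Sum>s'\<in>S. of_real (G s s') * H (mix \<sigma> s' s) (mix \<sigma> s s'))" for \<sigma>
  proof -
    have "(\<Sum>i<D. Bm N M A \<sigma> (U i) z (mix \<sigma> x y) * cnj (Bm N M A \<sigma> (U i) z (mix \<sigma> y x)))
      = (\<Sum>i<D. \<Sum>s\<in>S. \<Sum>s'\<in>S. of_real (U i s * U i s') * (Qm N A \<sigma> s z (mix \<sigma> x y) * cnj (Qm N A \<sigma> s' z (mix \<sigma> y x))))"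
      unfolding Bm_def S_def cnj_sum sum_product by (simp add: mult_ac)
    also have "\<dots> = (\<Sum>i<D. \<Sum>s\<in>S. \<Sum>s'\<in>S. of_real (U i s * U i s') * H (mix \<sigma> s' s) (mix \<sigma> s s'))"
      using QQ_H[OF herm xyz] unfolding H_def S_def by (intro sum.cong refl) simp
    also have "\<dots> = (\<Sum>s\<in>S. \<Sum>s'\<in>S. \<Sum>i<D. of_real (U i s * U i s') * H (mix \<sigma> s' s) (mix \<sigma> s s'))"
      by (rule swap21[symmetric])
    also have "\<dots> = (\<Sum>s\<in>S. \<Sum>s'\<in>S. of_real (G s s') * H (mix \<sigma> s' s) (mix \<sigma> s s'))"
      unfolding G_def by (simp add: sum_distrib_right)
    finally show ?thesis .
  qed
  have step2: "(\<Sum>s\<in>S. \<Sum>s'\<in>S. of_real (G s s') * H (mix \<sigma> s' s) (mix \<sigma> s s'))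
      = (\<Sum>p\<in>S. \<Sum>q\<in>S. of_real (G (mix \<sigma> q p) (mix \<sigma> p q)) * H p q)" for \<sigma>
  proof -
    have "(\<Sum>p\<in>S. \<Sum>q\<in>S. of_real (G (mix \<sigma> q p) (mix \<sigma> p q)) * H p q)
        = (\<Sum>p\<in>S. \<Sum>q\<in>S. of_real (G (mix \<sigma> (mix \<sigma> q p) (mix \<sigma> p q)) (mix \<sigma> (mix \<sigma> p q) (mix \<sigma> q p))) * H (mix \<sigma> p q) (mix \<sigma> q p))"
      unfolding S_def by (rule sum_mix_mi)
    also have "\<dots> = (\<Sum>p\<in>S. \<Sum>q\<in>S. of_real (G q p) * H (mix \<sigma> p q) (mix \<sigma> q p))"
      by (simp only: mix_mix1)
    also have "\<dots> = (\<Sum>q\<in>S. \<Sum>p\<in>S. of_real (G q p) * H (mix \<sigma> p q) (mix \<sigma> q p))"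
      by (rule sum.swap)
    finally show ?thesis by simp
  qed
  have "(\<Sum>\<sigma>\<in>Pow {..<N}. \<Sum>i<D. Bm N M A \<sigma> (U i) z (mix \<sigma> x y) * cnj (Bm N M A \<sigma> (U i) z (mix \<sigma> y x)))
      = (\<Sum>\<sigma>\<in>Pow {..<N}. \<Sum>p\<in>S. \<Sum>q\<in>S. of_real (G (mix \<sigma> q p) (mix \<sigma> p q)) * H p q)"
    using step1 step2 by simp
  also have "\<dots> = (\<Sum>p\<in>S. \<Sum>q\<in>S. \<Sum>\<sigma>\<in>Pow {..<N}. of_real (G (mix \<sigma> q p) (mix \<sigma> p q)) * H p q)"
    by (rule swap21[symmetric])
  also have "\<dots> = (\<Sum>p\<in>S. \<Sum>q\<in>S. of_real (\<Sum>\<sigma>\<in>Pow {..<N}. G (mix \<sigma> q p) (mix \<sigma> p q)) * H p q)"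
    by (simp add: sum_distrib_right)
  also have "\<dots> = (\<Sum>p\<in>S. \<Sum>q\<in>S. of_real (2^N * of_bool (q = p)) * H p q)"
    using coeff_identity[OF np] unfolding G_def S_def by (intro sum.cong refl) simp
  also have "\<dots> = (\<Sum>p\<in>S. 2^N * H p p)"
  proof (rule sum.cong[OF refl])
    fix p assume "p \<in> S"
    have "(\<Sum>q\<in>S. of_real (2^N * of_bool (q = p)) * H p q) = (\<Sum>q\<in>S. if q = p then 2^N * H p q else 0)"
      by (rule sum.cong[OF refl]) simp
    also have "\<dots> = 2^N * H p p" using \<open>p \<in> S\<close> fS by (simp add: sum.delta)
    finally show "(\<Sum>q\<in>S. of_real (2^N * of_bool (q = p)) * H p q) = 2^N * H p p" .
  qed
  finally show ?thesis unfolding H_def S_def by (simp add: sum_distrib_left)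
qed



lemma W_inner:
  "Wm N M d A \<rho> \<sigma> t = (\<Sum>x\<in>idx N d. \<Sum>y\<in>idx N d. \<rho> x y *
      (\<Sum>z\<in>idx N d. Bm N M A \<sigma> t z (mix \<sigma> x y) * cnj (Bm N M A \<sigma> t z (mix \<sigma> y x))))"
proof -
  define I where "I = idx N d"
  define B where "B = Bm N M A \<sigma> t"
  have "Wm N M d A \<rho> \<sigma> t = (\<Sum>z\<in>I. \<Sum>x\<in>I. \<Sum>y\<in>I. B z x * \<rho> (mix \<sigma> x y) (mix \<sigma> y x) * cnj (B z y))"
    unfolding Wm_def I_def B_def ..
  also have "\<dots> = (\<Sum>x\<in>I. \<Sum>y\<in>I. \<Sum>z\<in>I. B z x * \<rho> (mix \<sigma> x y) (mix \<sigma> y x) * cnj (B z y))"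
    by (rule swap21[symmetric])
  also have "\<dots> = (\<Sum>x\<in>I. \<Sum>y\<in>I. \<rho> (mix \<sigma> x y) (mix \<sigma> y x) *
      (\<Sum>z\<in>I. B z (mix \<sigma> (mix \<sigma> x y) (mix \<sigma> y x)) * cnj (B z (mix \<sigma> (mix \<sigma> y x) (mix \<sigma> x y)))))"
    by (simp add: mix_mix1 sum_distrib_left mult_ac)
  also have "\<dots> = (\<Sum>x\<in>I. \<Sum>y\<in>I. \<rho> x y * (\<Sum>z\<in>I. B z (mix \<sigma> x y) * cnj (B z (mix \<sigma> y x))))"
    unfolding I_def by (rule sum_mix_idx[symmetric])
  finally show ?thesis unfolding I_def B_def .
qed

lemma Hsum:
  "(\<Sum>z\<in>idx N d. \<Sum>p\<in>multi_idx N M. Hm N A x y z p p) =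
   (\<Sum>p\<in>multi_idx N M. \<Prod>k<N. mat_sq (d k) (A k (p k)) (y k) (x k))"
proof -
  have "(\<Sum>z\<in>idx N d. \<Sum>p\<in>multi_idx N M. Hm N A x y z p p) = (\<Sum>p\<in>multi_idx N M. \<Sum>z\<in>idx N d. Hm N A x y z p p)"
    by (rule sum.swap)
  also have "\<dots> = (\<Sum>p\<in>multi_idx N M. \<Prod>k<N. mat_sq (d k) (A k (p k)) (y k) (x k))"
  proof (rule sum.cong[OF refl])
    fix p
    have "(\<Prod>k<N. mat_sq (d k) (A k (p k)) (y k) (x k)) = (\<Prod>k<N. \<Sum>j\<in>{..<d k}. A k (p k) (y k) j * A k (p k) j (x k))"
      unfolding mat_sq_def ..
    also have "\<dots> = (\<Sum>z\<in>PiE {..<N} (\<lambda>k. {..<d k}). \<Prod>k<N. A k (p k) (y k) (z k) * A k (p k) (z k) (x k))"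
      by (rule prod_sum_PiE) auto
    finally show "(\<Sum>z\<in>idx N d. Hm N A x y z p p) = (\<Prod>k<N. mat_sq (d k) (A k (p k)) (y k) (x k))"
      unfolding idx_def Hm_def by simp
  qed
  finally show ?thesis .
qed

lemma stepB:
  assumes herm: "\<forall>k<N. \<forall>j<M. hermitian_mat (d k) (A k j)"
    and np: "norm_preserving_ml N M D U"
  shows "(\<Sum>\<sigma>\<in>Pow {..<N}. \<Sum>i<D. Wm N M d A \<rho> \<sigma> (U i)) =
    2^N * (\<Sum>s\<in>multi_idx N M. trace_op N d (op_mult N d \<rho> (tensor_op N (\<lambda>k. mat_sq (d k) (A k (s k))))))"
proof -
  define I where "I = idx N d"
  define S where "S = multi_idx N M"
  define inner where "inner \<sigma> i x y = (\<Sum>z\<in>I. Bm N M A \<sigma> (U i) z (mix \<sigma> x y) * cnj (Bm N M A \<sigma> (U i) z (mix \<sigma> y x)))" for \<sigma> i x y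
  define MS where "MS x y = (\<Sum>p\<in>S. \<Prod>k<N. mat_sq (d k) (A k (p k)) (y k) (x k))" for x y
  have "(\<Sum>\<sigma>\<in>Pow {..<N}. \<Sum>i<D. Wm N M d A \<rho> \<sigma> (U i)) = (\<Sum>\<sigma>\<in>Pow {..<N}. \<Sum>i<D. \<Sum>x\<in>I. \<Sum>y\<in>I. \<rho> x y * inner \<sigma> i x y)"
    unfolding W_inner inner_def I_def ..
  also have "\<dots> = (\<Sum>x\<in>I. \<Sum>y\<in>I. \<Sum>\<sigma>\<in>Pow {..<N}. \<Sum>i<D. \<rho> x y * inner \<sigma> i x y)"
    by (rule swap22)
  also have "\<dots> = (\<Sum>x\<in>I. \<Sum>y\<in>I. \<rho> x y * (2^N * MS x y))"
  proof (rule sum.cong[OF refl], rule sum.cong[OF refl])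
    fix x y assume x: "x \<in> I" and y: "y \<in> I"
    have "(\<Sum>\<sigma>\<in>Pow {..<N}. \<Sum>i<D. inner \<sigma> i x y) = (\<Sum>z\<in>I. \<Sum>\<sigma>\<in>Pow {..<N}. \<Sum>i<D.
        Bm N M A \<sigma> (U i) z (mix \<sigma> x y) * cnj (Bm N M A \<sigma> (U i) z (mix \<sigma> y x)))"
      unfolding inner_def by (rule swap21)
    also have "\<dots> = (\<Sum>z\<in>I. 2^N * (\<Sum>p\<in>S. Hm N A x y z p p))"
      using BB_sum[OF herm np] x y unfolding I_def S_def by (intro sum.cong refl) simp
    also have "\<dots> = 2^N * MS x y"
      unfolding MS_def S_def I_def sum_distrib_left[symmetric] Hsum ..
    finally show "(\<Sum>\<sigma>\<in>Pow {..<N}. \<Sum>i<D. \<rho> x y * inner \<sigma> i x y) = \<rho> x y * (2^N * MS x y)"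
      by (simp add: sum_distrib_left[symmetric])
  qed
  also have "\<dots> = 2^N * (\<Sum>s\<in>S. trace_op N d (op_mult N d \<rho> (tensor_op N (\<lambda>k. mat_sq (d k) (A k (s k))))))"
  proof -
    have "(\<Sum>s\<in>S. trace_op N d (op_mult N d \<rho> (tensor_op N (\<lambda>k. mat_sq (d k) (A k (s k)))))) =
        (\<Sum>s\<in>S. \<Sum>x\<in>I. \<Sum>y\<in>I. \<rho> x y * (\<Prod>k<N. mat_sq (d k) (A k (s k)) (y k) (x k)))"
      unfolding trace_op_def op_mult_def tensor_op_def I_def by simp
    also have "\<dots> = (\<Sum>x\<in>I. \<Sum>y\<in>I. \<Sum>s\<in>S. \<rho> x y * (\<Prod>k<N. mat_sq (d k) (A k (s k)) (y k) (x k)))"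
      by (rule swap21[symmetric])
    also have "\<dots> = (\<Sum>x\<in>I. \<Sum>y\<in>I. \<rho> x y * MS x y)"
      unfolding MS_def by (simp add: sum_distrib_left)
    finally show ?thesis by (simp add: sum_distrib_left mult_ac)
  qed
  finally show ?thesis unfolding S_def .
qed



lemma core:
  fixes U :: "nat \<Rightarrow> (nat \<Rightarrow> nat) \<Rightarrow> real"
  assumes np: "norm_preserving_ml N M D U"
    and dens: "density_op N d \<rho>"
    and ppt: "\<forall>\<tau>. \<tau> \<subseteq> {..<N} \<longrightarrow> psd_op N d (partial_transpose \<tau> \<rho>)"
    and herm: "\<forall>k<N. \<forall>j<M. hermitian_mat (d k) (A k j)"
  shows "(\<Sum>i<D. (\<Sum>s\<in>multi_idx N M. U i s *
            Re (trace_op N d (op_mult N d \<rho> (tensor_op N (\<lambda>k. A k (s k))))))^2)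
         \<le> (\<Sum>s\<in>multi_idx N M.
            Re (trace_op N d (op_mult N d \<rho> (tensor_op N (\<lambda>k. mat_sq (d k) (A k (s k)))))))"
proof -
  define c where "c i = (\<Sum>s\<in>multi_idx N M. U i s *
            Re (trace_op N d (op_mult N d \<rho> (tensor_op N (\<lambda>k. A k (s k))))))" for i
  define RHS where "RHS = (\<Sum>s\<in>multi_idx N M.
            Re (trace_op N d (op_mult N d \<rho> (tensor_op N (\<lambda>k. mat_sq (d k) (A k (s k)))))))"
  have tr: "trace_op N d \<rho> = 1" using dens by (simp add: density_op_def)
  have le: "(c i)^2 \<le> Re (Wm N M d A \<rho> \<sigma> (U i))" if "\<sigma> \<in> Pow {..<N}" for \<sigma> i
    unfolding c_def using stepA[OF _ tr herm] ppt that by auto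
  have "(2::real)^N * (\<Sum>i<D. (c i)^2) = (\<Sum>\<sigma>\<in>Pow {..<N}. \<Sum>i<D. (c i)^2)"
    by (simp add: card_Pow)
  also have "\<dots> \<le> (\<Sum>\<sigma>\<in>Pow {..<N}. \<Sum>i<D. Re (Wm N M d A \<rho> \<sigma> (U i)))"
    by (intro sum_mono le)
  also have "\<dots> = Re (\<Sum>\<sigma>\<in>Pow {..<N}. \<Sum>i<D. Wm N M d A \<rho> \<sigma> (U i))"
    by (simp add: Re_sum)
  also have "\<dots> = 2^N * RHS"
    unfolding stepB[OF herm np] RHS_def by (simp add: Re_sum)
  finally have "(2::real)^N * (\<Sum>i<D. (c i)^2) \<le> 2^N * RHS" .
  then have "(\<Sum>i<D. (c i)^2) \<le> RHS" by simp
  then show ?thesis unfolding c_def RHS_def .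
qed

lemma wsq:
  fixes w X :: "'a \<Rightarrow> real"
  assumes "finite L" "\<forall>l\<in>L. w l \<ge> 0" "sum w L = 1"
  shows "(\<Sum>l\<in>L. w l * X l)^2 \<le> (\<Sum>l\<in>L. w l * (X l)^2)"
proof -
  define m where "m = (\<Sum>l\<in>L. w l * X l)"
  have "0 \<le> (\<Sum>l\<in>L. w l * (X l - m)^2)" using assms by (intro sum_nonneg) auto
  also have "\<dots> = (\<Sum>l\<in>L. w l * (X l)^2) - 2 * m * (\<Sum>l\<in>L. w l * X l) + m^2 * sum w L"
    by (simp add: power2_diff algebra_simps sum.distrib sum_subtractf sum_distrib_left sum_distrib_right)
  also have "\<dots> = (\<Sum>l\<in>L. w l * (X l)^2) - m^2"
    using assms(3) unfolding m_def by (simp add: power2_eq_square)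
  finally show ?thesis unfolding m_def by simp
qed



theorem corollary1:
  fixes N M D :: nat
    and T :: "nat \<Rightarrow> (nat \<Rightarrow> nat) \<Rightarrow> real"
    and d :: "nat \<Rightarrow> nat"
    and \<rho> :: "(nat \<Rightarrow> nat) \<Rightarrow> (nat \<Rightarrow> nat) \<Rightarrow> complex"
    and A :: "nat \<Rightarrow> nat \<Rightarrow> nat \<Rightarrow> nat \<Rightarrow> complex"
  assumes "contraction_ml N M D T"
    and "convex_comb_norm_preserving N M D T \<or> has_np_dilation N M D T"
    and "density_op N d \<rho>"
    and "\<forall>\<tau>. \<tau> \<subseteq> {..<N} \<longrightarrow> psd_op N d (partial_transpose \<tau> \<rho>)"
    and "\<forall>k<N. \<forall>j<M. hermitian_mat (d k) (A k j)"
  shows "(\<Sum>i<D. (\<Sum>s\<in>multi_idx N M. T i s *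
            Re (trace_op N d (op_mult N d \<rho> (tensor_op N (\<lambda>k. A k (s k))))))^2)
         \<le> (\<Sum>s\<in>multi_idx N M.
            Re (trace_op N d (op_mult N d \<rho> (tensor_op N (\<lambda>k. mat_sq (d k) (A k (s k)))))))"
proof -
  define E where "E s = Re (trace_op N d (op_mult N d \<rho> (tensor_op N (\<lambda>k. A k (s k)))))" for s
  define RHS where "RHS = (\<Sum>s\<in>multi_idx N M.
            Re (trace_op N d (op_mult N d \<rho> (tensor_op N (\<lambda>k. mat_sq (d k) (A k (s k)))))))"
  have core': "(\<Sum>i<D'. (\<Sum>s\<in>multi_idx N M. U i s * E s)^2) \<le> RHS" if "norm_preserving_ml N M D' U" for D' U
    using core[OF that assms(3,4,5)] unfolding E_def RHS_def .
  show ?thesis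
    using assms(2)
  proof
    assume "convex_comb_norm_preserving N M D T"
    then obtain L :: "nat set" and w U where L: "finite L" "\<forall>l\<in>L. w l \<ge> (0::real)" "sum w L = 1"
      "\<forall>l\<in>L. norm_preserving_ml N M D (U l)"
      "\<forall>i<D. \<forall>s\<in>multi_idx N M. T i s = (\<Sum>l\<in>L. w l * U l i s)"
      unfolding convex_comb_norm_preserving_def by blast
    define X where "X l i = (\<Sum>s\<in>multi_idx N M. U l i s * E s)" for l i
    have "(\<Sum>i<D. (\<Sum>s\<in>multi_idx N M. T i s * E s)^2) = (\<Sum>i<D. (\<Sum>l\<in>L. w l * X l i)^2)"
    proof (rule sum.cong[OF refl])
      fix i assume "i \<in> {..<D}"
      then have "(\<Sum>s\<in>multi_idx N M. T i s * E s) = (\<Sum>s\<in>multi_idx N M. \<Sum>l\<in>L. w l * U l i s * E s)"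
        using L(5) by (intro sum.cong refl) (simp add: sum_distrib_right)
      also have "\<dots> = (\<Sum>l\<in>L. w l * X l i)"
        unfolding X_def by (subst sum.swap) (simp add: sum_distrib_left mult_ac)
      finally show "(\<Sum>s\<in>multi_idx N M. T i s * E s)^2 = (\<Sum>l\<in>L. w l * X l i)^2" by simp
    qed
    also have "\<dots> \<le> (\<Sum>i<D. \<Sum>l\<in>L. w l * (X l i)^2)"
      by (intro sum_mono wsq L)
    also have "\<dots> = (\<Sum>l\<in>L. w l * (\<Sum>i<D. (X l i)^2))"
      by (subst sum.swap) (simp add: sum_distrib_left)
    also have "\<dots> \<le> (\<Sum>l\<in>L. w l * RHS)"
      using L(2,4) core' unfolding X_def by (intro sum_mono mult_left_mono) auto
    also have "\<dots> = RHS" using L(3) by (simp add: sum_distrib_right[symmetric])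
    finally show ?thesis unfolding E_def RHS_def .
  next
    assume "has_np_dilation N M D T"
    then obtain D' U where U: "D' \<ge> D" "norm_preserving_ml N M D' U"
      "\<forall>i<D. \<forall>s\<in>multi_idx N M. U i s = T i s"
      unfolding has_np_dilation_def by blast
    have "(\<Sum>i<D. (\<Sum>s\<in>multi_idx N M. T i s * E s)^2) = (\<Sum>i<D. (\<Sum>s\<in>multi_idx N M. U i s * E s)^2)"
      using U(3) by (intro sum.cong refl) simp
    also have "\<dots> \<le> (\<Sum>i<D'. (\<Sum>s\<in>multi_idx N M. U i s * E s)^2)"
      using U(1) by (intro sum_mono2) auto
    also have "\<dots> \<le> RHS" by (rule core'[OF U(2)])
    finally show ?thesis unfolding E_def RHS_def .
  qed
qed


end
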